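(* Let $c\in\mathbb{C}(t)\setminus\{0,1,t\}$ and $F_n$, $P_1$, $d$ as in the context. For every $\epsilon>0$ there exist $\delta>0$ and an integer $N>0$ such that $$\frac{1}{\deg F_n}\log\|F_n(1,t)\|-\frac{\log|P_1(1,0)|}{d}<\epsilon$$ for all $t\in\mathbb{C}$ with $|t|<\delta$ and all $n\ge N$.
   Context: $F_{t_1,t_2}(z,w)=\big((t_1w^2-t_2z^2)^2,\;4t_2zw(w-z)(t_1w-t_2z)\big)$. $C=(c_1,c_2)$ is a pair of coprime homogeneous polynomials in $(t_1,t_2)$ of equal degree with $c(t)=c_1(t,1)/c_2(t,1)$. $F_1=F_{t_1,t_2}(C)/\gcd(F_{t_1,t_2}(C))=(P_1,Q_1)$, $d=\deg F_1$, $F_{n+1}=F_{t_1,t_2}(F_n)/t_2^2$, so $\deg F_n=4^{n-1}d$. $\|(z,w)\|=\max\{|z|,|w|\}$. *)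

theory Defs
  imports "HOL-Analysis.Analysis" "HOL-Computational_Algebra.Computational_Algebra" "HOL-Computational_Algebra.Field_as_Ring"
begin

text \<open>Bivariate polynomials in (t1,t2) are represented as elements of
  the ring C[t1][t2], i.e. the type complex poly poly: the outer variable
  is t2, the coefficients are polynomials in t1.\<close>

type_synonym bpoly = "complex poly poly"

definition T1 :: bpoly where "T1 = [:[:0, 1:]:]"
definition T2 :: bpoly where "T2 = [:0, 1:]"

definition eval2 :: "bpoly \<Rightarrow> complex \<Rightarrow> complex \<Rightarrow> complex" where
  "eval2 P x y = poly (poly P [:y:]) x"

text \<open>coeff (coeff P i) j is the coefficient of t2^i t1^j.\<close>
definition homogeneous :: "nat \<Rightarrow> bpoly \<Rightarrow> bool" where
  "homogeneous D P \<longleftrightarrow> (\<forall>i j. coeff (coeff P i) j \<noteq> 0 \<longrightarrow> i + j = D)"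

definition tdeg :: "bpoly \<Rightarrow> nat" where
  "tdeg P = Max {i + j | i j. coeff (coeff P i) j \<noteq> 0}"

definition hdeg :: "bpoly \<times> bpoly \<Rightarrow> nat" where
  "hdeg F = max (tdeg (fst F)) (tdeg (snd F))"

definition Fmap :: "bpoly \<times> bpoly \<Rightarrow> bpoly \<times> bpoly" where
  "Fmap zw = (case zw of (z, w) \<Rightarrow>
     ((T1 * w^2 - T2 * z^2)^2, 4 * T2 * z * w * (w - z) * (T1 * w - T2 * z)))"

definition F1 :: "bpoly \<Rightarrow> bpoly \<Rightarrow> bpoly \<times> bpoly" where
  "F1 c1 c2 = (case Fmap (c1, c2) of (A, B) \<Rightarrow> (A div gcd A B, B div gcd A B))"

text \<open>Fseq c1 c2 k = F_{k+1}.\<close>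
primrec Fseq :: "bpoly \<Rightarrow> bpoly \<Rightarrow> nat \<Rightarrow> bpoly \<times> bpoly" where
  "Fseq c1 c2 0 = F1 c1 c2"
| "Fseq c1 c2 (Suc k) = (case Fmap (Fseq c1 c2 k) of (A, B) \<Rightarrow> (A div T2^2, B div T2^2))"

text \<open>F_n for n \<ge> 1.\<close>
definition Fn :: "bpoly \<Rightarrow> bpoly \<Rightarrow> nat \<Rightarrow> bpoly \<times> bpoly" where
  "Fn c1 c2 n = Fseq c1 c2 (n - 1)"

text \<open>The rational function c(t) = c1(t,1)/c2(t,1) in C(t).\<close>
definition ratfun :: "bpoly \<Rightarrow> bpoly \<Rightarrow> complex poly fract" where
  "ratfun c1 c2 = Fract (poly c1 [:1:]) (poly c2 [:1:])"

definition pnorm :: "complex \<times> complex \<Rightarrow> real" where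
  "pnorm zw = max (cmod (fst zw)) (cmod (snd zw))"

end

theory Submission
  imports Defs
begin


lemma T2_dvd_iff: "T2 dvd (X::bpoly) \<longleftrightarrow> poly X 0 = 0"
  by (simp add: T2_def poly_eq_0_iff_dvd)

lemma prime_T2: "prime_elem T2"
proof (rule prime_elemI)
  show "T2 \<noteq> 0" by (simp add: T2_def)
  show "\<not> is_unit T2" by (simp add: T2_dvd_iff)
  fix a b :: bpoly assume "T2 dvd a * b"
  then show "T2 dvd a \<or> T2 dvd b" by (simp add: T2_dvd_iff)
qed

lemma h_T1: "poly T1 0 = [:0,1:]" by (simp add: T1_def)
lemma h_T2: "poly T2 0 = 0" by (simp add: T2_def)

lemma F1_T2: assumes "coprime c1 c2" shows "T2 dvd snd (F1 c1 c2)"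
proof -
  define A where "A = (T1 * c2^2 - T2 * c1^2)^2"
  define B where "B = 4 * T2 * c1 * c2 * (c2 - c1) * (T1 * c2 - T2 * c1)"
  define g where "g = gcd A B"
  have F: "snd (F1 c1 c2) = B div g" by (simp add: F1_def Fmap_def A_def B_def g_def)
  have Bg: "B = g * (B div g)" by (simp add: g_def)
  have hB: "poly B 0 = 0" by (simp add: B_def h_T2)
  show ?thesis
  proof (cases "poly c2 0 = 0")
    case False
    have "poly A 0 \<noteq> 0" using False by (simp add: A_def h_T1 h_T2)
    then have "poly g 0 \<noteq> 0" using T2_dvd_iff[of A] T2_dvd_iff[of g] dvd_trans[of T2 g A]
      by (metis g_def gcd_dvd1)
    then show ?thesis using hB Bg unfolding F T2_dvd_iff
      by (metis mult_eq_0_iff poly_mult)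
  next
    case True
    then obtain w where w: "c2 = T2 * w" using T2_dvd_iff by (metis dvdE)
    have hc1: "poly c1 0 \<noteq> 0"
    proof
      assume "poly c1 0 = 0"
      then have "T2 dvd c1" "T2 dvd c2" using True T2_dvd_iff by auto
      then have "is_unit T2" using assms coprime_common_divisor by blast
      then show False using prime_T2 prime_elem_def by blast
    qed
    define E where "E = T1 * T2 * w^2 - c1^2"
    have AE: "A = T2^2 * E^2" by (simp add: A_def E_def w power2_eq_square algebra_simps)
    have hE: "poly E 0 \<noteq> 0" using hc1 by (simp add: E_def h_T2)
    have BY: "B = T2^3 * (4 * c1 * w * (T2 * w - c1) * (T1 * w - c1))"
      by (simp add: B_def w power3_eq_cube algebra_simps)
    show ?thesis unfolding F
    proof (rule ccontr)
      assume nd: "\<not> T2 dvd B div g"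
      have "coprime (B div g) (T2^3)" using prime_elem_imp_power_coprime[OF prime_T2 nd] .
      moreover have "T2^3 dvd g * (B div g)" using BY Bg by (metis dvd_triv_left)
      ultimately have "T2^3 dvd g" by (metis coprime_commute coprime_dvd_mult_left_iff)
      moreover have "g dvd A" by (simp add: g_def)
      ultimately have "T2^2 * T2 dvd T2^2 * E^2" using AE by (metis dvd_trans power_Suc2 numeral_3_eq_3 Suc_numeral  semiring_norm(5))
      moreover have "T2^2 \<noteq> 0" by (simp add: T2_def)
      ultimately have "T2 dvd E^2" using dvd_times_left_cancel_iff by blast
      then show False using hE by (simp add: T2_dvd_iff)
    qed
  qed
qed


definition stepP :: "bpoly \<times> bpoly \<Rightarrow> bpoly \<times> bpoly" where
  "stepP x = ((T1*T2*(snd x)^2 - (fst x)^2)^2, 4* fst x* snd x*(T2* snd x - fst x)*(T1* snd x - fst x))"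

lemma Fmap_T2: "Fmap (P, T2*R) = (T2^2 * fst (stepP (P,R)), T2^2 * (T2 * snd (stepP (P,R))))"
  by (simp add: Fmap_def stepP_def power2_eq_square algebra_simps)

lemma Fseq_form:
  assumes "Fseq c1 c2 0 = (P0, T2*R0)"
  shows "Fseq c1 c2 k = (fst ((stepP^^k)(P0,R0)), T2 * snd ((stepP^^k)(P0,R0)))"
proof (induction k)
  case 0 then show ?case using assms by simp
next
  case (Suc k)
  have nz: "T2^2 \<noteq> 0" by (simp add: T2_def)
  have "Fseq c1 c2 (Suc k) = (case Fmap (fst ((stepP^^k)(P0,R0)), T2 * snd ((stepP^^k)(P0,R0))) of
          (A, B) \<Rightarrow> (A div T2^2, B div T2^2))" using Suc by simp
  also have "\<dots> = (fst (stepP ((stepP^^k)(P0,R0))), T2 * snd (stepP ((stepP^^k)(P0,R0))))"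
    unfolding Fmap_T2 using nz by simp
  finally show ?case by simp
qed

lemma eval2_add[simp]: "eval2 (a + b) x y = eval2 a x y + eval2 b x y" by (simp add: eval2_def)
lemma eval2_diff[simp]: "eval2 (a - b) x y = eval2 a x y - eval2 b x y" by (simp add: eval2_def)
lemma eval2_mult[simp]: "eval2 (a * b) x y = eval2 a x y * eval2 b x y" by (simp add: eval2_def)
lemma eval2_power[simp]: "eval2 (a ^ n) x y = eval2 a x y ^ n" by (induction n) (simp_all add: eval2_def)
lemma eval2_numeral[simp]: "eval2 (numeral n) x y = numeral n" by (simp add: eval2_def)
lemma eval2_T1[simp]: "eval2 T1 x y = x" by (simp add: eval2_def T1_def)
lemma eval2_T2[simp]: "eval2 T2 x y = y" by (simp add: eval2_def T2_def)

lemma eval2_pCons: "eval2 (pCons a P) x t = poly a x + t * eval2 P x t"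
  by (simp add: eval2_def)

lemma isCont_eval2: "isCont (\<lambda>t. eval2 P x t) t0"
proof (induction P)
  case 0 then show ?case by (simp add: eval2_def)
next
  case (pCons a P)
  then show ?case unfolding eval2_pCons by (intro continuous_intros)
qed

definition evp :: "complex \<Rightarrow> bpoly \<times> bpoly \<Rightarrow> complex \<times> complex" where
  "evp t x = (eval2 (fst x) 1 t, eval2 (snd x) 1 t)"

definition estep :: "complex \<Rightarrow> complex \<times> complex \<Rightarrow> complex \<times> complex" where
  "estep t x = ((t*(snd x)^2 - (fst x)^2)^2, 4* fst x* snd x*(t* snd x - fst x)*(snd x - fst x))"

lemma evp_step: "evp t (stepP x) = estep t (evp t x)"
  by (simp add: evp_def stepP_def estep_def)

lemma evp_iter: "evp t ((stepP^^k) x) = (estep t ^^ k) (evp t x)"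
  by (induction k) (simp_all add: evp_step)

definition Mx :: "complex \<times> complex \<Rightarrow> real" where
  "Mx x = max (cmod (fst x)) (cmod (snd x))"

lemma Mx_nonneg: "0 \<le> Mx x" by (simp add: Mx_def le_max_iff_disj)

lemma step_bound:
  assumes "cmod t \<le> 1"
  shows "3 * Mx (estep t x) \<le> (3 * Mx x)^4"
proof -
  obtain p r where x: "x = (p, r)" by (cases x)
  define m where "m = Mx x"
  have pm: "cmod p \<le> m" and rm: "cmod r \<le> m" by (auto simp: m_def Mx_def x)
  have m0: "0 \<le> m" using pm norm_ge_zero order_trans by blast
  have "cmod (t*r^2 - p^2) \<le> cmod t * cmod r ^2 + cmod p ^2"
    by (metis norm_mult norm_power norm_triangle_ineq4)
  also have "\<dots> \<le> 1 * m^2 + m^2"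
    by (intro add_mono mult_mono power_mono assms pm rm) auto
  finally have a1: "cmod (t*r^2 - p^2) \<le> 2*m^2" by simp
  have b1: "cmod ((t*r^2 - p^2)^2) \<le> 4 * m^4"
  proof -
    have "cmod ((t*r^2 - p^2)^2) = cmod (t*r^2 - p^2) ^ 2" by (simp add: norm_power)
    also have "\<dots> \<le> (2*m^2)^2" by (intro power_mono a1) auto
    finally show ?thesis by (simp add: power2_eq_square power4_eq_xxxx)
  qed
  have c1: "cmod (t*r - p) \<le> 2*m"
  proof -
    have "cmod (t*r - p) \<le> cmod t * cmod r + cmod p" by (metis norm_mult norm_triangle_ineq4)
    also have "\<dots> \<le> 1 * m + m" by (intro add_mono mult_mono assms pm rm) auto
    finally show ?thesis by simp
  qed
  have c2: "cmod (r - p) \<le> 2*m"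
    using norm_triangle_ineq4[of r p] pm rm by simp
  have b2: "cmod (4*p*r*(t*r - p)*(r - p)) \<le> 16 * m^4"
  proof -
    have "cmod (4*p*r*(t*r - p)*(r - p)) = 4 * cmod p * cmod r * cmod (t*r-p) * cmod (r-p)"
      by (simp add: norm_mult)
    also have "\<dots> \<le> 4 * m * m * (2*m) * (2*m)"
      by (intro mult_mono pm rm c1 c2 m0) (use m0 in \<open>auto intro: mult_nonneg_nonneg\<close>)
    finally show ?thesis by (simp add: power4_eq_xxxx)
  qed
  have "Mx (estep t x) \<le> 16 * m^4"
  proof -
    have "0 \<le> m^4" using m0 by simp
    then have h: "4*m^4 \<le> 16*m^4" by simp
    show ?thesis unfolding Mx_def estep_def x fst_conv snd_conv
      by (intro max.boundedI) (use b1 b2 h in linarith)+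
  qed
  then have "3 * Mx (estep t x) \<le> 81 * m^4" using zero_le_power[OF m0, of 4] by linarith
  also have "\<dots> = (3*m)^4" by (simp add: power_mult_distrib)
  finally show ?thesis by (simp add: m_def)
qed

lemma iter_bound:
  assumes "cmod t \<le> 1"
  shows "3 * Mx ((estep t ^^ k) x) \<le> (3 * Mx x)^(4^k)"
proof (induction k)
  case 0 then show ?case by simp
next
  case (Suc k)
  have "3 * Mx ((estep t ^^ Suc k) x) \<le> (3 * Mx ((estep t ^^ k) x))^4"
    using step_bound[OF assms] by simp
  also have "\<dots> \<le> ((3 * Mx x)^(4^k))^4"
    by (intro power_mono Suc) (simp add: Mx_nonneg)
  also have "\<dots> = (3 * Mx x)^(4^Suc k)" by (metis power_Suc power_mult mult.commute)
  finally show ?case .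
qed

lemma zero_iter:
  assumes "a0 \<noteq> 0" "8 \<le> C" "8 * Mx (a0, r0) \<le> cmod a0 * C"
  shows "fst ((estep 0 ^^ k) (a0, r0)) = a0^(4^k) \<and>
         8 * Mx ((estep 0 ^^ k) (a0, r0)) \<le> cmod a0 ^ (4^k) * C^(2^k)"
proof (induction k)
  case 0 then show ?case using assms by simp
next
  case (Suc k)
  obtain p r where pr: "(estep 0 ^^ k) (a0, r0) = (p, r)" by (cases "(estep 0 ^^ k) (a0, r0)")
  define \<alpha> where "\<alpha> = cmod a0 ^ (4^k)"
  define \<rho> where "\<rho> = C^(2^k)"
  define m where "m = Mx (p, r)"
  have p: "p = a0^(4^k)" and mb: "8 * m \<le> \<alpha> * \<rho>" using Suc pr by (auto simp: \<alpha>_def \<rho>_def m_def)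
  have cp: "cmod p = \<alpha>" by (simp add: p \<alpha>_def norm_power)
  have pm: "cmod p \<le> m" and rm: "cmod r \<le> m" by (auto simp: m_def Mx_def)
  have m0: "0 \<le> m" using pm norm_ge_zero order_trans by blast
  have a0: "0 \<le> \<alpha>" by (simp add: \<alpha>_def)
  have r8: "8 \<le> \<rho>"
  proof -
    have "C^1 \<le> C^(2^k)" using assms(2) by (intro power_increasing) auto
    then show ?thesis using assms(2) by (simp add: \<rho>_def)
  qed
  have new: "(estep 0 ^^ Suc k) (a0, r0) = (p^4, 4*p*r*(- p)*(r - p))"
    using pr by (simp add: estep_def power4_eq_xxxx power2_eq_square)
  have f: "p^4 = a0^(4^Suc k)" by (simp add: p power_mult[symmetric] mult.commute)
  have e1: "8 * cmod (p^4) \<le> \<alpha>^4 * \<rho>^2"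
  proof -
    have "8 * cmod (p^4) = 8 * \<alpha>^4" by (simp add: cp norm_power)
    have "\<rho>^1 \<le> \<rho>^2" using r8 by (intro power_increasing) auto
    then have "8 \<le> \<rho>^2" using r8 by simp
    then have "8 * \<alpha>^4 \<le> \<rho>^2 * \<alpha>^4" by (intro mult_right_mono) (auto simp: a0)
    then have "8 * cmod (p^4) \<le> \<rho>^2 * \<alpha>^4" using \<open>8 * cmod (p^4) = 8 * \<alpha>^4\<close> by simp
    then show ?thesis by (simp add: mult.commute)
  qed
  have c2: "cmod (r - p) \<le> 2*m"
    using norm_triangle_ineq4[of r p] pm rm by simp
  have e2: "8 * cmod (4*p*r*(- p)*(r - p)) \<le> \<alpha>^4 * \<rho>^2"
  proof -
    have "8 * cmod (4*p*r*(- p)*(r - p)) = 32 * \<alpha>^2 * cmod r * cmod (r - p)"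
      by (simp add: norm_mult cp power2_eq_square)
    also have "\<dots> \<le> 32 * \<alpha>^2 * m * (2*m)"
      by (intro mult_mono rm c2 m0) (use m0 a0 in auto)
    also have "\<dots> = \<alpha>^2 * (8*m)^2" by (simp add: power2_eq_square)
    also have "\<dots> \<le> \<alpha>^2 * (\<alpha>*\<rho>)^2"
      by (intro mult_left_mono power_mono mb) (auto simp: m0)
    finally have "8 * cmod (4*p*r*(- p)*(r - p)) \<le> \<alpha>^2 * (\<alpha>*\<rho>)^2" .
    moreover have "\<alpha>^2 * (\<alpha>*\<rho>)^2 = \<alpha>^4 * \<rho>^2" by (simp add: power2_eq_square power4_eq_xxxx mult_ac)
    ultimately show ?thesis by simp
  qed
  have "8 * Mx ((estep 0 ^^ Suc k) (a0, r0)) \<le> \<alpha>^4 * \<rho>^2"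
    unfolding new Mx_def fst_conv snd_conv using e1 e2 by (auto simp: max_def)
  also have "\<alpha>^4 * \<rho>^2 = cmod a0 ^ (4^Suc k) * C^(2^Suc k)"
    by (simp add: \<alpha>_def \<rho>_def power_mult[symmetric] mult.commute)
  finally show ?case using new f by simp
qed


theorem lemma4p3:
  fixes c1 c2 :: bpoly and e :: nat and \<epsilon> :: real
  assumes "homogeneous e c1" and "homogeneous e c2"
    and "coprime c1 c2"
    and "ratfun c1 c2 \<notin> {0, 1, Fract [:0, 1:] 1}"
    and "\<epsilon> > 0"
  shows "\<exists>\<delta>>0. \<exists>N>0. \<forall>t n. cmod t < \<delta> \<and> n \<ge> N \<longrightarrow>
     pnorm (eval2 (fst (Fn c1 c2 n)) 1 t, eval2 (snd (Fn c1 c2 n)) 1 t) = 0 \<or>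
     ln (pnorm (eval2 (fst (Fn c1 c2 n)) 1 t, eval2 (snd (Fn c1 c2 n)) 1 t))
         / real (4 ^ (n - 1) * hdeg (F1 c1 c2))
       - ln (cmod (eval2 (fst (F1 c1 c2)) 1 0)) / real (hdeg (F1 c1 c2)) < \<epsilon>"
proof -
  define d where "d = hdeg (F1 c1 c2)"
  obtain R0 where R0: "snd (F1 c1 c2) = T2 * R0" using F1_T2[OF assms(3)] by (auto elim: dvdE)
  define P0 where "P0 = fst (F1 c1 c2)"
  have Fs0: "Fseq c1 c2 0 = (P0, T2 * R0)" using R0 by (simp add: P0_def prod_eq_iff)
  define x0 where "x0 t = evp t (P0, R0)" for t
  define X where "X k t = (estep t ^^ k) (x0 t)" for k t
  have pn: "pnorm (eval2 (fst (Fn c1 c2 n)) 1 t, eval2 (snd (Fn c1 c2 n)) 1 t)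
      = max (cmod (fst (X (n-1) t))) (cmod t * cmod (snd (X (n-1) t)))" for n t
    unfolding Fn_def Fseq_form[OF Fs0] pnorm_def X_def x0_def evp_iter[symmetric]
    by (simp add: evp_def norm_mult)
  define a where "a = fst (x0 0)"
  have a0: "eval2 (fst (F1 c1 c2)) 1 0 = a" by (simp add: a_def x0_def evp_def P0_def)
  have hd: "hdeg (F1 c1 c2) = d" by (simp add: d_def)
  show ?thesis
  proof (cases "d = 0")
    case True
    have "\<forall>t n. cmod t < 1 \<and> n \<ge> (1::nat) \<longrightarrow>
     pnorm (eval2 (fst (Fn c1 c2 n)) 1 t, eval2 (snd (Fn c1 c2 n)) 1 t) = 0 \<or>
     ln (pnorm (eval2 (fst (Fn c1 c2 n)) 1 t, eval2 (snd (Fn c1 c2 n)) 1 t))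
         / real (4 ^ (n - 1) * d) - ln (cmod a) / real d < \<epsilon>"
    proof (intro allI impI disjI2)
      fix t :: complex and n :: nat
      show "ln (pnorm (eval2 (fst (Fn c1 c2 n)) 1 t, eval2 (snd (Fn c1 c2 n)) 1 t))
         / real (4 ^ (n - 1) * d) - ln (cmod a) / real d < \<epsilon>"
      proof -
        have z1: "real (4 ^ (n - 1) * d) = 0" using True by simp
        have z2: "real d = 0" using True by simp
        show ?thesis unfolding z1 z2 division_ring_divide_zero diff_self by (rule assms(5))
      qed
    qed
    then show ?thesis unfolding hd a0 by - (rule exI[of _ "1::real"], rule conjI, rule zero_less_one, rule exI[of _ "1::nat"], rule conjI, rule zero_less_one, assumption)
  next
    case False
    then have dpos: "0 < real d" by simp
    define B where "B = exp (ln (cmod a) + \<epsilon> * d)"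
    have Bpos: "0 < B" by (simp add: B_def)
    have keyN: "\<exists>N. 3 * Mx (X N 0) < B^(4^N)"
    proof (cases "a = 0")
      case True
      have "X 1 0 = (0,0)" using True by (simp add: X_def estep_def a_def)
      then show ?thesis using Bpos by (intro exI[of _ 1]) (simp add: Mx_def)
    next
      case False
      then have ap: "0 < cmod a" by simp
      define C where "C = max 8 (8 * Mx (x0 0) / cmod a)"
      have C8: "8 \<le> C" by (simp add: C_def)
      have x0e: "x0 0 = (a, snd (x0 0))" by (simp add: a_def)
      have "8 * Mx (x0 0) / cmod a \<le> C" by (simp add: C_def)
      then have Cb: "8 * Mx (a, snd (x0 0)) \<le> cmod a * C"
        using ap x0e by (simp add: pos_divide_le_eq mult.commute)
      define E where "E = exp (\<epsilon> * d)"
      have E1: "1 < E" using dpos assms(5) by (simp add: E_def)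
      obtain N where N: "C < E^N" using real_arch_pow[OF E1] by blast
      have "E^N \<le> E^(2^N)" using E1 by (intro power_increasing) (auto intro: less_imp_le less_exp)
      with N have CE: "C < E^(2^N)" by simp
      have zi: "8 * Mx (X N 0) \<le> cmod a ^ (4^N) * C^(2^N)"
        using zero_iter[OF False C8 Cb, of N] x0e by (simp add: X_def)
      have "C^(2^N) < (E^(2^N))^(2^N)"
        by (rule power_strict_mono[OF CE]) (use C8 in auto)
      also have "(E^(2^N))^(2^N) = E^(4^N)"
      proof -
        have "(4::nat)^N = 2^N * 2^N" by (simp flip: power_mult_distrib)
        then show ?thesis by (simp add: power_mult)
      qed
      finally have CE2: "C^(2^N) < E^(4^N)" .
      have "B = cmod a * E" using ap by (simp add: B_def E_def exp_add)
      then have BN: "B^(4^N) = cmod a ^ (4^N) * E^(4^N)" by (simp add: power_mult_distrib)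
      have "cmod a ^ (4^N) * C^(2^N) < cmod a ^ (4^N) * E^(4^N)"
        using CE2 ap by simp
      moreover have "3 * Mx (X N 0) \<le> 8 * Mx (X N 0)" using Mx_nonneg[of "X N 0"] by simp
      ultimately show ?thesis using zi BN by (intro exI[of _ N]) linarith
    qed
    then obtain N where N: "3 * Mx (X N 0) < B^(4^N)" by blast
    have XN: "X N t = evp t ((stepP^^N) (P0, R0))" for t by (simp add: X_def x0_def evp_iter)
    have cont: "isCont (\<lambda>t. 3 * Mx (X N t)) 0"
      unfolding XN Mx_def evp_def fst_conv snd_conv
      by (intro continuous_intros isCont_eval2)
    then have "((\<lambda>t. 3 * Mx (X N t)) \<longlongrightarrow> 3 * Mx (X N 0)) (at 0)"
      by (simp add: isCont_def)
    from order_tendstoD(2)[OF this N]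
    obtain \<delta>0 where d0: "\<delta>0 > 0" and d0b: "\<And>t. t \<noteq> 0 \<Longrightarrow> dist t 0 < \<delta>0 \<Longrightarrow> 3 * Mx (X N t) < B^(4^N)"
      unfolding eventually_at by blast
    have bnd: "3 * Mx (X N t) < B^(4^N)" if "cmod t < \<delta>0" for t
      using d0b[of t] N that by (cases "t = 0") auto
    show ?thesis unfolding hd a0
    proof (intro exI[of _ "min 1 \<delta>0"] exI[of _ "N+1"] conjI allI impI)
      show "0 < min 1 \<delta>0" using d0 by simp
      show "0 < N + 1" by simp
      fix t n assume tn: "cmod t < min 1 \<delta>0 \<and> N + 1 \<le> n"
      define k where "k = n - 1"
      define m where "m = k - N"
      have kmN: "k = m + N" using tn by (simp add: k_def m_def)
      have t1: "cmod t \<le> 1" using tn by simp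
      have Xk: "X k t = (estep t ^^ m) (X N t)" by (simp add: X_def kmN funpow_add)
      have "3 * Mx (X k t) \<le> (3 * Mx (X N t))^(4^m)" unfolding Xk by (rule iter_bound[OF t1])
      also have "\<dots> < (B^(4^N))^(4^m)"
        by (rule power_strict_mono[OF bnd]) (use tn Mx_nonneg in auto)
      also have "\<dots> = B^(4^k)" by (simp add: kmN power_mult[symmetric] power_add mult.commute)
      finally have MB: "3 * Mx (X k t) < B^(4^k)" .
      define q where "q = pnorm (eval2 (fst (Fn c1 c2 n)) 1 t, eval2 (snd (Fn c1 c2 n)) 1 t)"
      have q: "q = max (cmod (fst (X k t))) (cmod t * cmod (snd (X k t)))"
        unfolding q_def pn k_def ..
      have "cmod t * cmod (snd (X k t)) \<le> cmod (snd (X k t))"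
        using t1 by (simp add: mult_left_le_one_le)
      then have "q \<le> Mx (X k t)" unfolding q Mx_def by auto
      also have "\<dots> \<le> 3 * Mx (X k t)" using Mx_nonneg[of "X k t"] by simp
      finally have qB: "q < B^(4^k)" using MB by simp
      show "q = 0 \<or> ln q / real (4 ^ (n - 1) * d) - ln (cmod a) / real d < \<epsilon>"
      proof (cases "q = 0")
        case True then show ?thesis by (rule disjI1)
      next
        case False
        note False
        moreover have "0 \<le> q" unfolding q by (simp add: le_max_iff_disj)
        ultimately have qp: "0 < q" by simp
        have "ln q < ln (B^(4^k))" using qp qB Bpos by simp
        also have "\<dots> = real (4^k) * (ln (cmod a) + \<epsilon> * d)"
          using Bpos by (simp add: ln_realpow B_def)
        finally have lq: "ln q < real (4^k) * (ln (cmod a) + \<epsilon> * d)" .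
        have qd: "0 < real (4^k) * real d" using dpos by simp
        have "ln q / (real (4^k) * real d) < real (4^k) * (ln (cmod a) + \<epsilon> * d) / (real (4^k) * real d)"
          by (rule divide_strict_right_mono[OF lq qd])
        also have "\<dots> = (ln (cmod a) + \<epsilon> * d) / real d"
          by (rule mult_divide_mult_cancel_left) simp
        also have "\<dots> = ln (cmod a) / real d + \<epsilon>"
          using dpos by (simp add: add_divide_distrib)
        finally have fin: "ln q / (real (4^k) * real d) < ln (cmod a) / real d + \<epsilon>" .
        have rr: "real (4 ^ (n - 1) * d) = real (4^k) * real d" unfolding k_def by (rule of_nat_mult)
        have "ln q / real (4 ^ (n - 1) * d) - ln (cmod a) / real d < \<epsilon>"
          unfolding rr using fin by linarith
        then show ?thesis by (rule disjI2)
      qed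
    qed
  qed
qed

end
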